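(* Assume (B1)–(B3). Let $\lambda>0$, $c_k>0$, $p_{k-1}\in\mathbb{R}^\ell$, $z_{k-1}\in\mathbb{R}^n$, $\sigma_{k-1}>0$, set $L^\psi_{k-1}:=\lambda\Lambda(c_k,p_{k-1})+1$, and let $(z_k,v_k,\varepsilon_k)\in\mathbb{R}^n\times\mathbb{R}^n\times\mathbb{R}_+$ satisfy $$v_k\in\partial_{\varepsilon_k}\Big(\lambda\mathcal L_{c_k}(\cdot;p_{k-1})+\tfrac12\|\cdot-z_{k-1}\|^2\Big)(z_k),\qquad \|v_k\|^2+2\varepsilon_k\le\sigma_{k-1}^2\|v_k+z_{k-1}-z_k\|^2.$$ Define $\delta_k:=\varepsilon_k/\lambda$, $r_k:=v_k+z_{k-1}-z_k$, $$\hat z_k:=\mathrm{argmin}_u\Big\{\lambda\big[\langle\nabla_z\widetilde{\mathcal L}_{c_k}(z_k;p_{k-1}),u-z_k\rangle+h(u)\big]-\langle r_k,u-z_k\rangle+\tfrac{L^\psi_{k-1}}{2}\|u-z_k\|^2\Big\},$$ $w_k:=\frac1\lambda[r_k+L^\psi_{k-1}(z_k-\hat z_k)]$, $p_k:=\Pi_{\mathcal K^*}(p_{k-1}+c_kg(z_k))$, $\hat p_k:=\Pi_{\mathcal K^*}(p_{k-1}+c_kg(\hat z_k))$, $\hat q_k:=\frac{1}{c_k}(p_{k-1}-\hat p_k)$, and $\hat w_k:=w_k+\nabla_z\widetilde{\mathcal L}_{c_k}(\hat z_k;p_{k-1})-\nabla_z\widetilde{\mathcal L}_{c_k}(z_k;p_{k-1})$.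 Then: (a) $w_k\in\nabla f(z_k)+\partial_{\delta_k}h(z_k)+\nabla g(z_k)p_k$, $\ \|w_k\|\le\frac1\lambda\big(1+\sigma_{k-1}\sqrt{L^\psi_{k-1}}\big)\|r_k\|$, and $\delta_k\le\frac{1}{2\lambda}\sigma_{k-1}^2\|r_k\|^2$; (b) $\hat w_k\in\nabla f(\hat z_k)+\partial h(\hat z_k)+\nabla g(\hat z_k)\hat p_k$, $\ \langle g(\hat z_k)+\hat q_k,\hat p_k\rangle=0$, $\ g(\hat z_k)+\hat q_k\preceq_{\mathcal K}0$, $\ \hat p_k\succeq_{\mathcal K^*}0$, and $$\|\hat w_k\|\le\frac1\lambda\big(1+2\sigma_{k-1}\sqrt{L^\psi_{k-1}}\big)\|r_k\|,\qquad \|\hat q_k\|\le\frac{B_g^{(1)}\sigma_{k-1}}{\sqrt{L^\psi_{k-1}}}\|r_k\|+\frac1{c_k}\|p_k-p_{k-1}\|.$$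
   Context: $\mathcal K\subseteq\mathbb{R}^\ell$ is a nonempty closed convex cone, $\mathcal K^*=\{y:\langle y,x\rangle\ge0\ \forall x\in\mathcal K\}$ its dual cone, $u\preceq_{\mathcal K}v$ means $v-u\in\mathcal K$, $\Pi_S$ is the Euclidean projection onto a closed convex set $S$ and $\mathrm{dist}(y,S)$ the Euclidean distance. For a proper function $\varphi$, $\partial_\varepsilon\varphi(z):=\{u:\varphi(z')\ge\varphi(z)+\langle u,z'-z\rangle-\varepsilon\ \forall z'\}$ and $\partial\varphi=\partial_0\varphi$. For differentiable $g:\mathbb{R}^n\to\mathbb{R}^\ell$, $\nabla g(z)\in\mathbb{R}^{n\times\ell}$ is the transpose of the Jacobian, with operator norm $\|\nabla g(z)\|$. $g$ is $\mathcal K$-convex if $g(tz'+(1-t)z)-tg(z')-(1-t)g(z)\preceq_{\mathcal K}0$ for all $z,z'$, $t\in[0,1]$. (B1) $h:\mathbb{R}^n\to(-\infty,\infty]$ is proper, lower semicontinuous, convex, and $K_h$-Lipschitz continuous on its domain for some $K_h>0$; $\mathcal H:=\mathrm{dom}\,h$ is compact with diameter $D_h$. (B2) $f$ is (not necessarily convex and) differentiable on an open set containing $\mathcal H$, and there are $m_f,L_f>0$ with $f(z')-f(z)-\langle\nabla f(z),z'-z\rangle\ge-\frac{m_f}{2}\|z'-z\|^2$ and $\|\nabla f(z')-\nabla f(z)\|\le L_f\|z'-z\|$ for all $z,z'\in\mathcal H$. (B3) $g:\mathbb{R}^n\to\mathbb{R}^\ell$ is $\mathcal K$-convex and differentiable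 with $L_g$-Lipschitz $\nabla g$ on $\mathbb{R}^n$, $L_g>0$. Constants: $B_g^{(0)}:=\sup_{\mathcal H}\|g\|$, $B_g^{(1)}:=\sup_{\mathcal H}\|\nabla g\|$. Functions: $\mathcal L_c(z;p):=f(z)+h(z)+\frac1{2c}[\mathrm{dist}^2(p+cg(z),-\mathcal K)-\|p\|^2]$ (augmented Lagrangian), $\widetilde{\mathcal L}_c(z;p):=f(z)+\frac1{2c}[\mathrm{dist}^2(p+cg(z),-\mathcal K)-\|p\|^2]$, whose $z$-gradient is $\nabla_z\widetilde{\mathcal L}_c(z;p)=\nabla f(z)+\nabla g(z)\Pi_{\mathcal K^*}(p+cg(z))$, and $\Lambda(c,p):=L_f+L_g\|p\|+c(B_g^{(0)}L_g+[B_g^{(1)}]^2)$. *)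

theory Defs
  imports "HOL-Analysis.Analysis"
begin

definition dual_cone :: "'b::euclidean_space set \<Rightarrow> 'b set" where
  "dual_cone K = {y. \<forall>x\<in>K. 0 \<le> y \<bullet> x}"

definition proj :: "'b::euclidean_space set \<Rightarrow> 'b \<Rightarrow> 'b" where
  "proj S y = closest_point S y"

text \<open>epsilon-subdifferential of the extended-real-valued function that equals phi on
  its (effective) domain D and +infinity outside D.  It is empty at points outside D.\<close>
definition eps_subdiff :: "'a::real_inner set \<Rightarrow> ('a \<Rightarrow> real) \<Rightarrow> real \<Rightarrow> 'a \<Rightarrow> 'a set" where
  "eps_subdiff D phi eps z =
     {u. z \<in> D \<and> (\<forall>z'\<in>D. phi z' \<ge> phi z + u \<bullet> (z' - z) - eps)}"

text \<open>nabla g(z) p, where Dg z is the (Frechet) derivative of g at z, i.e. nabla g(z) is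
  the adjoint (transpose of the Jacobian) of Dg z.\<close>
definition nabla_app :: "('a::euclidean_space \<Rightarrow> 'a \<Rightarrow> 'b::euclidean_space) \<Rightarrow> 'a \<Rightarrow> 'b \<Rightarrow> 'a" where
  "nabla_app Dg z p = adjoint (Dg z) p"

text \<open>Augmented Lagrangian L_c(z;p) (the h-part is +infinity outside dom h).\<close>
definition AugL :: "'b::euclidean_space set \<Rightarrow> ('a \<Rightarrow> real) \<Rightarrow> ('a \<Rightarrow> real) \<Rightarrow> ('a \<Rightarrow> 'b)
    \<Rightarrow> real \<Rightarrow> 'a \<Rightarrow> 'b \<Rightarrow> real" where
  "AugL K f h g c z p = f z + h z
     + (1 / (2 * c)) * ((infdist (p + c *\<^sub>R g z) (uminus ` K))\<^sup>2 - (norm p)\<^sup>2)"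

text \<open>Gradient in z of the smooth part tilde L_c(z;p).\<close>
definition grad_tL :: "'b::euclidean_space set \<Rightarrow> ('a::euclidean_space \<Rightarrow> 'a) \<Rightarrow> ('a \<Rightarrow> 'b)
    \<Rightarrow> ('a \<Rightarrow> 'a \<Rightarrow> 'b) \<Rightarrow> real \<Rightarrow> 'a \<Rightarrow> 'b \<Rightarrow> 'a" where
  "grad_tL K gf g Dg c z p = gf z + nabla_app Dg z (proj (dual_cone K) (p + c *\<^sub>R g z))"

definition Bg0 :: "'a set \<Rightarrow> ('a \<Rightarrow> 'b::real_normed_vector) \<Rightarrow> real" where
  "Bg0 H g = Sup ((\<lambda>z. norm (g z)) ` H)"

definition Bg1 :: "'a::euclidean_space set \<Rightarrow> ('a \<Rightarrow> 'a \<Rightarrow> 'b::euclidean_space) \<Rightarrow> real" where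
  "Bg1 H Dg = Sup ((\<lambda>z. onorm (nabla_app Dg z)) ` H)"

definition Lam :: "real \<Rightarrow> real \<Rightarrow> real \<Rightarrow> real \<Rightarrow> real \<Rightarrow> 'b::real_normed_vector \<Rightarrow> real" where
  "Lam Lf Lg B0 B1 c p = Lf + Lg * norm p + c * (B0 * Lg + B1\<^sup>2)"

end

theory Submission
  imports Defs
begin

lemma adj_bound:
  fixes M :: "'a::euclidean_space \<Rightarrow> 'b::euclidean_space" and N :: "'b \<Rightarrow> 'a"
  assumes "linear N" "\<And>x y. M x \<bullet> y = x \<bullet> N y"
  shows "norm (M x) \<le> onorm N * norm x"
proof -
  have bl: "bounded_linear N" using assms(1) linear_conv_bounded_linear by blast
  have "(norm (M x))^2 = x \<bullet> N (M x)" using assms(2)[of x "M x"] by (simp add: power2_norm_eq_inner)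
  also have "\<dots> \<le> norm x * norm (N (M x))" by (rule norm_cauchy_schwarz)
  also have "\<dots> \<le> norm x * (onorm N * norm (M x))"
    by (rule mult_left_mono[OF onorm[OF bl]]) simp
  finally have *: "norm (M x) * norm (M x) \<le> (onorm N * norm x) * norm (M x)"
    by (simp add: power2_eq_square algebra_simps)
  show ?thesis
  proof (cases "norm (M x) = 0")
    case True then show ?thesis using onorm_pos_le[OF bl] by simp
  next
    case False then have "norm (M x) > 0" by simp
    with * show ?thesis by (simp add: mult_le_cancel_right)
  qed
qed

lemma dual_cone_closed: "closed (dual_cone K)"
proof -
  have "dual_cone K = (\<Inter>x\<in>K. {y. y \<bullet> x \<ge> 0})" by (auto simp: dual_cone_def)
  moreover have "closed {y. y \<bullet> x \<ge> 0}" for x :: 'a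
    using closed_halfspace_ge[where a=x and b=0] by (simp add: inner_commute)
  ultimately show ?thesis by auto
qed

lemma dual_cone_convex: "convex (dual_cone K)"
  unfolding dual_cone_def convex_def by (auto simp: inner_add_left)

lemma zero_dual: "0 \<in> dual_cone K"
  by (simp add: dual_cone_def)

lemma proj_norm: "norm (proj (dual_cone K) y) \<le> norm y"
  using closest_point_lipschitz[OF dual_cone_convex dual_cone_closed, of K y 0]
    closest_point_self[OF zero_dual, of K] zero_dual[of K]
  by (auto simp: proj_def dist_norm)

lemma proj_lip: "norm (proj (dual_cone K) y - proj (dual_cone K) y') \<le> norm (y - y')"
  using closest_point_lipschitz[OF dual_cone_convex dual_cone_closed, of K y y'] zero_dual[of K]
  by (auto simp: proj_def dist_norm)

lemma proj_in: "proj (dual_cone K) y \<in> dual_cone K"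
  using closest_point_in_set[OF dual_cone_closed, of K] zero_dual by (auto simp: proj_def)

lemma moreau:
  fixes K :: "'b::euclidean_space set" and y :: 'b
  assumes "K \<noteq> {}" "closed K" "convex K" "cone K"
  defines "P \<equiv> closest_point (uminus ` K) y"
  shows "proj (dual_cone K) y = y - P" "- P \<in> K" "(y - P) \<bullet> P = 0"
        "infdist y (uminus ` K) = norm (y - P)"
proof -
  let ?N = "uminus ` K"
  have cN: "closed ?N" using assms closed_negations by blast
  have vN: "convex ?N" using convex_negations assms by blast
  have nN: "?N \<noteq> {}" using assms by auto
  have PN: "P \<in> ?N" using closest_point_in_set[OF cN nN] P_def by simp
  then obtain a where a: "a \<in> K" "P = - a" by auto
  show "- P \<in> K" using a by simp
  have dot: "(y - P) \<bullet> (k - P) \<le> 0" if "k \<in> ?N" for k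
    using closest_point_dot[OF vN cN that] P_def by simp
  obtain x0 where "x0 \<in> K" using assms(1) by auto
  then have "0 *\<^sub>R x0 \<in> K" using assms(4) unfolding cone_def by blast
  then have "(0::'b) \<in> ?N" by force
  from dot[OF this] have d1: "(y - P) \<bullet> P \<ge> 0" by simp
  have "2 *\<^sub>R a \<in> K" using assms(4) a unfolding cone_def by auto
  then have "- (2 *\<^sub>R a) \<in> ?N" by blast
  from dot[OF this] a have d2: "(y - P) \<bullet> P \<le> 0" by (simp add: algebra_simps inner_diff_right)
  show orth: "(y - P) \<bullet> P = 0" using d1 d2 by simp
  have dual: "y - P \<in> dual_cone K"
    unfolding dual_cone_def
  proof safe
    fix x assume x: "x \<in> K"
    have h: "(1/2) *\<^sub>R a + (1/2) *\<^sub>R x \<in> K"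
      by (rule convexD[OF assms(3) a(1) x]) auto
    have "(2::real) *\<^sub>R ((1/2) *\<^sub>R a + (1/2) *\<^sub>R x) \<in> K"
      using assms(4) h unfolding cone_def by (metis zero_le_numeral)
    moreover have "(2::real) *\<^sub>R ((1/2) *\<^sub>R a + (1/2) *\<^sub>R x) = a + x"
      by (simp add: scaleR_add_right)
    ultimately have "a + x \<in> K" by simp
    then have "- (a + x) \<in> ?N" by blast
    from dot[OF this] a show "0 \<le> (y - P) \<bullet> x" by (simp add: inner_diff_right inner_add_right)
  qed
  have "y - P = closest_point (dual_cone K) y"
  proof (rule closest_point_unique[OF dual_cone_convex dual_cone_closed dual], safe)
    fix z assume z: "z \<in> dual_cone K"
    have "P \<bullet> z \<le> 0" using z a unfolding dual_cone_def by (auto simp: inner_commute)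
    have "(norm (y - z))^2 = (norm P)^2 + 2 * ((y - P) \<bullet> P) - 2 * (P \<bullet> z) + (norm (y - P - z))^2"
      by (simp add: power2_norm_eq_inner inner_diff_left inner_diff_right inner_commute algebra_simps)
    then have "(norm P)^2 \<le> (norm (y - z))^2" using orth \<open>P \<bullet> z \<le> 0\<close>
      zero_le_power2[of "norm (y - P - z)"] by linarith
    then have "norm P \<le> norm (y - z)" by (rule power2_le_imp_le) simp
    then show "dist y (y - P) \<le> dist y z" by (simp add: dist_norm)
  qed
  then show "proj (dual_cone K) y = y - P" by (simp add: proj_def)
  show "infdist y ?N = norm (y - P)"
    using setdist_closest_point[OF cN nN, of y] by (simp add: infdist_eq_setdist P_def dist_norm)
qed

lemma descent:
  fixes \<phi> :: "'a::real_normed_vector \<Rightarrow> real"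
  assumes der: "\<And>t. 0 \<le> t \<Longrightarrow> t \<le> 1 \<Longrightarrow> (\<phi> has_derivative \<phi>' (x + t *\<^sub>R d)) (at (x + t *\<^sub>R d))"
    and lip: "\<And>t. 0 \<le> t \<Longrightarrow> t \<le> 1 \<Longrightarrow> \<phi>' (x + t *\<^sub>R d) d - \<phi>' x d \<le> L * t * (norm d)^2"
  shows "\<phi> (x + d) - \<phi> x - \<phi>' x d \<le> L / 2 * (norm d)^2"
proof -
  define \<psi> where "\<psi> t = \<phi> (x + t *\<^sub>R d) - t * \<phi>' x d - L/2 * t^2 * (norm d)^2" for t
  have D: "(\<psi> has_real_derivative (\<phi>' (x + t *\<^sub>R d) d - \<phi>' x d - L * t * (norm d)^2)) (at t)"
    if "0 \<le> t" "t \<le> 1" for t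
  proof -
    have lin: "linear (\<phi>' (x + t *\<^sub>R d))" using der[OF that] has_derivative_linear by blast
    have "((\<lambda>s. x + s *\<^sub>R d) has_derivative (\<lambda>s. s *\<^sub>R d)) (at t)"
      by (auto intro!: derivative_eq_intros)
    from has_derivative_compose[OF this der[OF that]]
    have "((\<lambda>s. \<phi> (x + s *\<^sub>R d)) has_derivative (\<lambda>s. \<phi>' (x + t *\<^sub>R d) (s *\<^sub>R d))) (at t)" .
    moreover have "(\<lambda>s. \<phi>' (x + t *\<^sub>R d) (s *\<^sub>R d)) = (*) (\<phi>' (x + t *\<^sub>R d) d)"
      using linear_scale[OF lin] by (auto simp: mult.commute)
    ultimately have "((\<lambda>s. \<phi> (x + s *\<^sub>R d)) has_real_derivative \<phi>' (x + t *\<^sub>R d) d) (at t)"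
      by (simp add: has_field_derivative_def)
    then show ?thesis unfolding \<psi>_def
      by (auto intro!: derivative_eq_intros)
  qed
  obtain z where z: "0 < z" "z < 1"
    "\<psi> 1 - \<psi> 0 = (1 - 0) * (\<phi>' (x + z *\<^sub>R d) d - \<phi>' x d - L * z * (norm d)^2)"
    using MVT2[of 0 1 \<psi>, OF _ D] by auto
  have "\<psi> 1 \<le> \<psi> 0" using z lip[of z] by simp
  then show ?thesis unfolding \<psi>_def by simp
qed

lemma norm_add_sq:
  fixes x y :: "'a::real_inner"
  shows "(norm (x + y))^2 = (norm x)^2 + 2 * (x \<bullet> y) + (norm y)^2"
  unfolding power2_norm_eq_inner by (simp add: inner_add_left inner_add_right inner_commute)

lemma lim0:
  fixes A B :: real
  assumes "\<And>t. 0 < t \<Longrightarrow> t \<le> 1 \<Longrightarrow> 0 \<le> A + t * B"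
  shows "0 \<le> A"
proof (rule ccontr)
  assume "\<not> 0 \<le> A"
  define t where "t = min 1 (- A / (2 * (\<bar>B\<bar> + 1)))"
  have q: "0 < - A / (2 * (\<bar>B\<bar> + 1))"
    by (rule divide_pos_pos) (use \<open>\<not> 0 \<le> A\<close> in auto)
  have tp: "0 < t" "t \<le> 1" using q by (auto simp: t_def)
  have "t * \<bar>B\<bar> \<le> (- A / (2 * (\<bar>B\<bar> + 1))) * (\<bar>B\<bar> + 1)"
    by (rule mult_mono) (use less_imp_le[OF q] in \<open>auto simp: t_def\<close>)
  also have "\<dots> = - A / 2" by (simp add: field_simps)
  finally have "t * B \<le> - A / 2" using tp abs_ge_self[of B] mult_left_mono[of B "\<bar>B\<bar>" t] by linarith
  with assms[OF tp] \<open>\<not> 0 \<le> A\<close> show False by linarith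
qed

theorem proposition3p3:
  fixes K :: "'b::euclidean_space set"
    and H :: "'a::euclidean_space set"
    and h f :: "'a \<Rightarrow> real" and gf :: "'a \<Rightarrow> 'a"
    and g :: "'a \<Rightarrow> 'b" and Dg :: "'a \<Rightarrow> 'a \<Rightarrow> 'b"
    and Kh mf Lf Lg lam c \<sigma> \<epsilon>k :: real
    and p0 :: 'b and z0 zk vk zh :: 'a
  assumes K_cone: "K \<noteq> {}" "closed K" "convex K" "cone K"
    \<comment> \<open>(B1): h is +infinity outside H = dom h; proper, lsc, convex, Lipschitz on H; H compact\<close>
    and B1: "H \<noteq> {}" "compact H" "convex H" "convex_on H h" "continuous_on H h" "Kh > 0"
      "\<forall>z\<in>H. \<forall>z'\<in>H. \<bar>h z' - h z\<bar> \<le> Kh * norm (z' - z)"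
    \<comment> \<open>(B2)\<close>
    and B2: "\<exists>U. open U \<and> H \<subseteq> U \<and> (\<forall>z\<in>U. (f has_derivative (\<lambda>x. gf z \<bullet> x)) (at z))"
      "mf > 0" "Lf > 0"
      "\<forall>z\<in>H. \<forall>z'\<in>H. f z' - f z - gf z \<bullet> (z' - z) \<ge> - (mf / 2) * (norm (z' - z))\<^sup>2"
      "\<forall>z\<in>H. \<forall>z'\<in>H. norm (gf z' - gf z) \<le> Lf * norm (z' - z)"
    \<comment> \<open>(B3)\<close>
    and B3: "\<forall>z z' t. 0 \<le> t \<and> t \<le> 1 \<longrightarrow>
               t *\<^sub>R g z' + (1 - t) *\<^sub>R g z - g (t *\<^sub>R z' + (1 - t) *\<^sub>R z) \<in> K"
      "\<forall>z. (g has_derivative Dg z) (at z)"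
      "Lg > 0"
      "\<forall>z z'. onorm (\<lambda>p. nabla_app Dg z' p - nabla_app Dg z p) \<le> Lg * norm (z' - z)"
    and params: "lam > 0" "c > 0" "\<sigma> > 0" "\<epsilon>k \<ge> 0"
  defines "Lpsi \<equiv> lam * Lam Lf Lg (Bg0 H g) (Bg1 H Dg) c p0 + 1"
  assumes incl: "vk \<in> eps_subdiff H
                   (\<lambda>z. lam * AugL K f h g c z p0 + (1/2) * (norm (z - z0))\<^sup>2) \<epsilon>k zk"
    and ineq: "(norm vk)\<^sup>2 + 2 * \<epsilon>k \<le> \<sigma>\<^sup>2 * (norm (vk + z0 - zk))\<^sup>2"
  defines "\<delta> \<equiv> \<epsilon>k / lam"
  defines "r \<equiv> vk + z0 - zk"
  assumes zh_argmin: "zh \<in> H"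
      "\<forall>u\<in>H. lam * (grad_tL K gf g Dg c zk p0 \<bullet> (zh - zk) + h zh) - r \<bullet> (zh - zk)
                + Lpsi / 2 * (norm (zh - zk))\<^sup>2
             \<le> lam * (grad_tL K gf g Dg c zk p0 \<bullet> (u - zk) + h u) - r \<bullet> (u - zk)
                + Lpsi / 2 * (norm (u - zk))\<^sup>2"
  defines "w \<equiv> (1 / lam) *\<^sub>R (r + Lpsi *\<^sub>R (zk - zh))"
  defines "pk \<equiv> proj (dual_cone K) (p0 + c *\<^sub>R g zk)"
  defines "ph \<equiv> proj (dual_cone K) (p0 + c *\<^sub>R g zh)"
  defines "qh \<equiv> (1 / c) *\<^sub>R (p0 - ph)"
  defines "wh \<equiv> w + grad_tL K gf g Dg c zh p0 - grad_tL K gf g Dg c zk p0"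
  shows
    "(w \<in> (\<lambda>u. gf zk + u + nabla_app Dg zk pk) ` eps_subdiff H h \<delta> zk
     \<and> norm w \<le> (1 / lam) * (1 + \<sigma> * sqrt Lpsi) * norm r
     \<and> \<delta> \<le> (1 / (2 * lam)) * \<sigma>\<^sup>2 * (norm r)\<^sup>2)
     \<and> (wh \<in> (\<lambda>u. gf zh + u + nabla_app Dg zh ph) ` eps_subdiff H h 0 zh
     \<and> (g zh + qh) \<bullet> ph = 0
     \<and> - (g zh + qh) \<in> K
     \<and> ph \<in> dual_cone K
     \<and> norm wh \<le> (1 / lam) * (1 + 2 * \<sigma> * sqrt Lpsi) * norm r
     \<and> norm qh \<le> Bg1 H Dg * \<sigma> / sqrt Lpsi * norm r + (1 / c) * norm (pk - p0))"
proof -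
  define B0 where "B0 = Bg0 H g"
  define B1 where "B1 = Bg1 H Dg"
  define d where "d = zh - zk"
  define G where "G = grad_tL K gf g Dg c zk p0"
  define s where "s = r - lam *\<^sub>R G - Lpsi *\<^sub>R d"
  define Lam0 where "Lam0 = Lam Lf Lg B0 B1 c p0"
  define nd where "nd = norm d"
  have zkH: "zk \<in> H" using incl by (simp add: eps_subdiff_def)
  have zhH: "zh \<in> H" by (rule zh_argmin(1))
  have lin: "\<And>z. linear (Dg z)" using B3(2) has_derivative_linear by blast
  have adjw: "\<And>z x p. Dg z x \<bullet> p = x \<bullet> nabla_app Dg z p"
    using adjoint_works[OF lin] by (simp add: nabla_app_def)
  have nlin: "\<And>z. linear (nabla_app Dg z)" unfolding nabla_app_def using adjoint_linear[OF lin] .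
  have nbl: "\<And>z. bounded_linear (nabla_app Dg z)" using nlin linear_conv_bounded_linear by blast
  have ndbl: "\<And>z z'. bounded_linear (\<lambda>p. nabla_app Dg z' p - nabla_app Dg z p)"
    by (rule bounded_linear_sub[OF nbl nbl])
  have ndiff: "\<And>z z' p. norm (nabla_app Dg z' p - nabla_app Dg z p) \<le> Lg * norm (z' - z) * norm p"
  proof -
    fix z z' p
    have "norm (nabla_app Dg z' p - nabla_app Dg z p)
        \<le> onorm (\<lambda>p. nabla_app Dg z' p - nabla_app Dg z p) * norm p"
      by (rule onorm[OF ndbl])
    also have "\<dots> \<le> Lg * norm (z' - z) * norm p"
      by (rule mult_right_mono) (use B3(4) in auto)
    finally show "norm (nabla_app Dg z' p - nabla_app Dg z p) \<le> Lg * norm (z' - z) * norm p" .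
  qed
  have Ddiff: "\<And>z z' x. norm (Dg z' x - Dg z x) \<le> Lg * norm (z' - z) * norm x"
  proof -
    fix z z' x
    have "norm (Dg z' x - Dg z x) \<le> onorm (\<lambda>p. nabla_app Dg z' p - nabla_app Dg z p) * norm x"
      by (rule adj_bound[of "\<lambda>p. nabla_app Dg z' p - nabla_app Dg z p" "\<lambda>x. Dg z' x - Dg z x"])
        (use ndbl linear_conv_bounded_linear in \<open>auto simp: inner_diff_left inner_diff_right adjw\<close>)
    also have "\<dots> \<le> Lg * norm (z' - z) * norm x"
      by (rule mult_right_mono) (use B3(4) in auto)
    finally show "norm (Dg z' x - Dg z x) \<le> Lg * norm (z' - z) * norm x" .
  qed
  obtain z1 where z1: "z1 \<in> H" using B1(1) by auto
  obtain R where R: "\<forall>z\<in>H. norm z \<le> R" using compact_imp_bounded[OF B1(2)] bounded_iff by auto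
  have onb: "onorm (nabla_app Dg z) \<le> Lg * norm (z - z1) + onorm (nabla_app Dg z1)" for z
  proof -
    have "nabla_app Dg z = (\<lambda>p. (nabla_app Dg z p - nabla_app Dg z1 p) + nabla_app Dg z1 p)" by simp
    then have "onorm (nabla_app Dg z) \<le> onorm (\<lambda>p. nabla_app Dg z p - nabla_app Dg z1 p) + onorm (nabla_app Dg z1)"
      using onorm_triangle[OF ndbl nbl] by metis
    moreover have "onorm (\<lambda>p. nabla_app Dg z p - nabla_app Dg z1 p) \<le> Lg * norm (z - z1)" using B3(4) by blast
    ultimately show ?thesis by linarith
  qed
  have bddB1: "bdd_above ((\<lambda>z. onorm (nabla_app Dg z)) ` H)"
  proof (rule bdd_aboveI2)
    fix z assume "z \<in> H"
    have "norm (z - z1) \<le> R + norm z1" using R \<open>z \<in> H\<close> norm_triangle_ineq4[of z z1] by force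
    then have "Lg * norm (z - z1) \<le> Lg * (R + norm z1)" using B3(3) by (simp add: mult_left_mono)
    then show "onorm (nabla_app Dg z) \<le> Lg * (R + norm z1) + onorm (nabla_app Dg z1)" using onb[of z] by linarith
  qed
  have nH: "\<And>z. z \<in> H \<Longrightarrow> onorm (nabla_app Dg z) \<le> B1"
    unfolding B1_def Bg1_def by (rule cSup_upper) (use bddB1 in auto)
  have B1pos: "0 \<le> B1" using nH[OF z1] onorm_pos_le[OF nbl, of z1] by linarith
  have gcont: "continuous_on H g"
    by (rule has_derivative_continuous_on) (use B3(2) has_derivative_at_withinI in blast)
  have "compact (g ` H)" by (rule compact_continuous_image[OF gcont B1(2)])
  then obtain M where M: "\<forall>y\<in>g ` H. norm y \<le> M" using compact_imp_bounded bounded_iff by metis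
  have bddB0: "bdd_above ((\<lambda>z. norm (g z)) ` H)" using M by (intro bdd_aboveI2[of _ _ M]) auto
  have gH: "\<And>z. z \<in> H \<Longrightarrow> norm (g z) \<le> B0"
    unfolding B0_def Bg0_def by (rule cSup_upper) (use bddB0 in auto)
  have B0pos: "0 \<le> B0" using gH[OF z1] norm_ge_zero[of "g z1"] by linarith
  have DgH: "\<And>z x. z \<in> H \<Longrightarrow> norm (Dg z x) \<le> B1 * norm x"
  proof -
    fix z x assume "z \<in> H"
    have "norm (Dg z x) \<le> onorm (nabla_app Dg z) * norm x"
      by (rule adj_bound[OF nlin adjw])
    also have "\<dots> \<le> B1 * norm x" by (rule mult_right_mono[OF nH[OF \<open>z \<in> H\<close>]]) simp
    finally show "norm (Dg z x) \<le> B1 * norm x" .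
  qed
  have nabH: "\<And>z p. z \<in> H \<Longrightarrow> norm (nabla_app Dg z p) \<le> B1 * norm p"
  proof -
    fix z p assume "z \<in> H"
    have "norm (nabla_app Dg z p) \<le> onorm (nabla_app Dg z) * norm p" by (rule onorm[OF nbl])
    also have "\<dots> \<le> B1 * norm p" by (rule mult_right_mono[OF nH[OF \<open>z \<in> H\<close>]]) simp
    finally show "norm (nabla_app Dg z p) \<le> B1 * norm p" .
  qed
  have glip: "\<And>z z'. z \<in> H \<Longrightarrow> z' \<in> H \<Longrightarrow> norm (g z' - g z) \<le> B1 * norm (z' - z)"
  proof -
    fix z z' assume zz: "z \<in> H" "z' \<in> H"
    show "norm (g z' - g z) \<le> B1 * norm (z' - z)"
    proof (rule differentiable_bound[OF B1(3) _ _ zz(2) zz(1)])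
      show "(g has_derivative Dg x) (at x within H)" for x using B3(2) has_derivative_at_withinI by blast
      show "onorm (Dg x) \<le> B1" if "x \<in> H" for x
        by (rule onorm_le) (use DgH[OF that] in auto)
    qed
  qed
  have Lam0pos: "Lam0 \<ge> Lf" unfolding Lam0_def Lam_def
    using B0pos B1pos B3(3) params(2) by (simp add: add_nonneg_nonneg)
  have LpsiE: "Lpsi = lam * Lam0 + 1" unfolding Lpsi_def Lam0_def B0_def B1_def by simp
  have lamLam: "lam * Lam0 \<ge> 0" using Lam0pos B2(3) params(1) by simp
  have Lpsi1: "Lpsi \<ge> 1" using LpsiE lamLam by simp
  have pkb: "norm pk \<le> norm p0 + c * B0"
  proof -
    have "norm pk \<le> norm (p0 + c *\<^sub>R g zk)" unfolding pk_def by (rule proj_norm)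
    also have "\<dots> \<le> norm p0 + c * norm (g zk)" using norm_triangle_ineq[of p0 "c *\<^sub>R g zk"] params(2) by simp
    also have "\<dots> \<le> norm p0 + c * B0" using gH[OF zkH] params(2) by simp
    finally show ?thesis .
  qed
  have phb: "norm ph \<le> norm p0 + c * B0"
  proof -
    have "norm ph \<le> norm (p0 + c *\<^sub>R g zh)" unfolding ph_def by (rule proj_norm)
    also have "\<dots> \<le> norm p0 + c * norm (g zh)" using norm_triangle_ineq[of p0 "c *\<^sub>R g zh"] params(2) by simp
    also have "\<dots> \<le> norm p0 + c * B0" using gH[OF zhH] params(2) by simp
    finally show ?thesis .
  qed
  have dg: "norm (g zh - g zk) \<le> B1 * nd" using glip[OF zkH zhH] by (simp add: nd_def d_def)
  have phpk: "norm (ph - pk) \<le> c * B1 * nd"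
  proof -
    have "norm (ph - pk) \<le> norm ((p0 + c *\<^sub>R g zh) - (p0 + c *\<^sub>R g zk))" unfolding ph_def pk_def by (rule proj_lip)
    also have "\<dots> = c * norm (g zh - g zk)" using params(2) by (simp add: scaleR_diff_right[symmetric])
    also have "\<dots> \<le> c * (B1 * nd)" using dg params(2) by simp
    finally show ?thesis by simp
  qed
  have seg: "zk + t *\<^sub>R d \<in> H" if "0 \<le> t" "t \<le> 1" for t
  proof -
    have "(1 - t) *\<^sub>R zk + t *\<^sub>R zh \<in> H" by (rule convexD[OF B1(3) zkH zhH]) (use that in auto)
    moreover have "zk + t *\<^sub>R d = (1 - t) *\<^sub>R zk + t *\<^sub>R zh" by (simp add: d_def algebra_simps)
    ultimately show ?thesis by simp
  qed
  have zhd: "zh = zk + d" by (simp add: d_def)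
  have Gdef: "G = gf zk + nabla_app Dg zk pk" unfolding G_def grad_tL_def pk_def by simp
  obtain U where U: "open U" "H \<subseteq> U" "\<forall>z\<in>U. (f has_derivative (\<lambda>x. gf z \<bullet> x)) (at z)" using B2(1) by blast
  define \<phi> where "\<phi> u = f u + pk \<bullet> g u" for u
  define \<phi>' where "\<phi>' z v = gf z \<bullet> v + pk \<bullet> Dg z v" for z v
  have desc: "\<phi> (zk + d) - \<phi> zk - \<phi>' zk d \<le> (Lf + Lg * norm pk) / 2 * (norm d)^2"
  proof (rule descent)
    fix t :: real assume t: "0 \<le> t" "t \<le> 1"
    have pU: "zk + t *\<^sub>R d \<in> U" using seg[OF t] U(2) by blast
    show "(\<phi> has_derivative \<phi>' (zk + t *\<^sub>R d)) (at (zk + t *\<^sub>R d))"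
    proof -
      have e1: "\<phi>' (zk + t *\<^sub>R d) = (\<lambda>v. gf (zk + t *\<^sub>R d) \<bullet> v + pk \<bullet> Dg (zk + t *\<^sub>R d) v)"
        by (simp add: \<phi>'_def fun_eq_iff)
      have e2: "\<phi> = (\<lambda>u. f u + pk \<bullet> g u)" by (simp add: \<phi>_def fun_eq_iff)
      have f1: "(f has_derivative (\<lambda>x. gf (zk + t *\<^sub>R d) \<bullet> x)) (at (zk + t *\<^sub>R d))" using U(3) pU by blast
      have f2: "((\<lambda>u. pk \<bullet> g u) has_derivative (\<lambda>v. pk \<bullet> Dg (zk + t *\<^sub>R d) v)) (at (zk + t *\<^sub>R d))"
        by (rule has_derivative_inner_right[OF B3(2)[rule_format]])
      show ?thesis unfolding e1 e2 by (rule has_derivative_add[OF f1 f2])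
    qed
    have pH: "zk + t *\<^sub>R d \<in> H" by (rule seg[OF t])
    have e1: "(gf (zk + t *\<^sub>R d) - gf zk) \<bullet> d \<le> Lf * (t * nd) * nd"
    proof -
      have "(gf (zk + t *\<^sub>R d) - gf zk) \<bullet> d \<le> norm (gf (zk + t *\<^sub>R d) - gf zk) * nd"
        unfolding nd_def by (rule norm_cauchy_schwarz)
      also have "\<dots> \<le> Lf * norm (zk + t *\<^sub>R d - zk) * nd"
      proof (rule mult_right_mono)
        show "norm (gf (zk + t *\<^sub>R d) - gf zk) \<le> Lf * norm (zk + t *\<^sub>R d - zk)"
          using B2(5) pH zkH by blast
      qed (simp add: nd_def)
      finally show ?thesis using t by (simp add: nd_def)
    qed
    have e2: "pk \<bullet> (Dg (zk + t *\<^sub>R d) d - Dg zk d) \<le> norm pk * (Lg * (t * nd) * nd)"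
    proof -
      have "pk \<bullet> (Dg (zk + t *\<^sub>R d) d - Dg zk d) \<le> norm pk * norm (Dg (zk + t *\<^sub>R d) d - Dg zk d)"
        by (rule norm_cauchy_schwarz)
      also have "\<dots> \<le> norm pk * (Lg * norm (zk + t *\<^sub>R d - zk) * norm d)"
        by (rule mult_left_mono[OF Ddiff]) simp
      finally show ?thesis using t by (simp add: nd_def)
    qed
    have "\<phi>' (zk + t *\<^sub>R d) d - \<phi>' zk d
        = (gf (zk + t *\<^sub>R d) - gf zk) \<bullet> d + pk \<bullet> (Dg (zk + t *\<^sub>R d) d - Dg zk d)"
      unfolding \<phi>'_def by (simp add: inner_diff_left inner_diff_right)
    also have "\<dots> \<le> Lf * (t * nd) * nd + norm pk * (Lg * (t * nd) * nd)" using e1 e2 by linarith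
    also have "\<dots> = (Lf + Lg * norm pk) * t * (norm d)^2" by (simp add: nd_def power2_eq_square algebra_simps)
    finally show "\<phi>' (zk + t *\<^sub>R d) d - \<phi>' zk d \<le> (Lf + Lg * norm pk) * t * (norm d)^2" .
  qed
  have phiG: "\<phi>' zk d = G \<bullet> d"
  proof -
    have a: "pk \<bullet> Dg zk d = nabla_app Dg zk pk \<bullet> d" using adjw[of zk d pk] by (metis inner_commute)
    show ?thesis unfolding \<phi>'_def Gdef by (simp add: inner_add_left a)
  qed
  define qq where "qq z = (1 / (2 * c)) * ((infdist (p0 + c *\<^sub>R g z) (uminus ` K))\<^sup>2 - (norm p0)\<^sup>2)" for z
  have AugLE: "\<And>z. AugL K f h g c z p0 = f z + h z + qq z" unfolding AugL_def qq_def by simp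
  have qqb: "qq zh - qq zk \<le> pk \<bullet> (g zh - g zk) + c / 2 * (norm (g zh - g zk))^2"
  proof -
    define y where "y = p0 + c *\<^sub>R g zk"
    define y' where "y' = p0 + c *\<^sub>R g zh"
    define P where "P = closest_point (uminus ` K) y"
    note mo = moreau[OF K_cone, of y, folded P_def]
    have pkP: "pk = y - P" using mo(1) unfolding pk_def y_def by simp
    have PN: "P \<in> uminus ` K" using mo(2) by (metis add.inverse_inverse image_eqI)
    have i1: "infdist y' (uminus ` K) \<le> norm (y' - P)" using infdist_le[OF PN, of y'] by (simp add: dist_norm)
    have i1': "(infdist y' (uminus ` K))^2 \<le> (norm (y' - P))^2"
      by (rule power_mono[OF i1 infdist_nonneg])
    have yy: "y' - P = pk + c *\<^sub>R (g zh - g zk)" unfolding pkP y_def y'_def by (simp add: algebra_simps)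
    have "(norm (y' - P))^2 = (norm pk)^2 + 2 * c * (pk \<bullet> (g zh - g zk)) + c^2 * (norm (g zh - g zk))^2"
      unfolding yy power2_norm_eq_inner
      by (simp add: inner_add_left inner_add_right inner_diff_left inner_diff_right inner_commute power2_eq_square algebra_simps)
    moreover have "infdist y (uminus ` K) = norm pk" using mo(4) pkP by simp
    ultimately have "(infdist y' (uminus ` K))^2 - (infdist y (uminus ` K))^2
       \<le> 2 * c * (pk \<bullet> (g zh - g zk)) + c^2 * (norm (g zh - g zk))^2" using i1' by simp
    then have "(1 / (2 * c)) * ((infdist y' (uminus ` K))^2 - (infdist y (uminus ` K))^2)
       \<le> (1 / (2 * c)) * (2 * c * (pk \<bullet> (g zh - g zk)) + c^2 * (norm (g zh - g zk))^2)"
      by (rule mult_left_mono) (use params(2) in simp_all)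
    also have "\<dots> = pk \<bullet> (g zh - g zk) + c / 2 * (norm (g zh - g zk))^2"
      using params(2) by (simp add: field_simps power2_eq_square)
    finally show ?thesis unfolding qq_def y_def y'_def by (simp add: algebra_simps)
  qed
  have smooth: "(f zh + qq zh) - (f zk + qq zk) - G \<bullet> d \<le> Lam0 / 2 * nd^2"
  proof -
    have A: "f zh - f zk + pk \<bullet> (g zh - g zk) - G \<bullet> d \<le> (Lf + Lg * norm pk) / 2 * nd^2"
      using desc phiG unfolding \<phi>_def zhd[symmetric] nd_def by (simp add: inner_diff_right)
    have B: "Lg * norm pk * nd^2 \<le> Lg * (norm p0 + c * B0) * nd^2"
      using pkb B3(3) by (simp add: mult_left_mono mult_right_mono)
    have C: "c * (norm (g zh - g zk))^2 \<le> c * (B1^2 * nd^2)"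
    proof -
      have "(norm (g zh - g zk))^2 \<le> (B1 * nd)^2" using dg by (simp add: power_mono)
      then show ?thesis using params(2) by (simp add: power_mult_distrib)
    qed
    have "Lam0 = Lf + Lg * (norm p0 + c * B0) + c * B1^2"
      unfolding Lam0_def Lam_def by (simp add: algebra_simps)
    then show ?thesis using A B C qqb by (simp add: field_simps)
  qed
  have E1: "lam * (h zk - h zh) \<le> \<epsilon>k + lam * (G \<bullet> d) - r \<bullet> d + Lpsi / 2 * nd^2"
  proof -
    have "lam * AugL K f h g c zh p0 + (1/2) * (norm (zh - z0))\<^sup>2
        \<ge> lam * AugL K f h g c zk p0 + (1/2) * (norm (zk - z0))\<^sup>2 + vk \<bullet> (zh - zk) - \<epsilon>k"
      using incl zhH by (simp add: eps_subdiff_def)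
    then have I: "lam * (f zh + h zh + qq zh) + (1/2) * (norm (zh - z0))\<^sup>2
        \<ge> lam * (f zk + h zk + qq zk) + (1/2) * (norm (zk - z0))\<^sup>2 + vk \<bullet> d - \<epsilon>k"
      by (simp add: AugLE d_def)
    have sq: "(norm (zh - z0))\<^sup>2 = (norm (zk - z0))\<^sup>2 + 2 * ((zk - z0) \<bullet> d) + nd^2"
      unfolding zhd nd_def by (simp add: power2_norm_eq_inner inner_add_left inner_add_right inner_diff_left inner_diff_right inner_commute)
    have rd: "r \<bullet> d = vk \<bullet> d - (zk - z0) \<bullet> d" unfolding r_def by (simp add: inner_add_left inner_diff_left)
    have sm: "lam * ((f zh + qq zh) - (f zk + qq zk) - G \<bullet> d) \<le> lam * (Lam0 / 2 * nd^2)"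
      by (rule mult_left_mono[OF smooth]) (use params(1) in simp)
    define M where "M = lam * (Lam0 / 2 * nd^2)"
    define Fh where "Fh = lam * (f zh + qq zh)"
    define Fk where "Fk = lam * (f zk + qq zk)"
    define Nh where "Nh = (norm (zh - z0))\<^sup>2"
    define Nk where "Nk = (norm (zk - z0))\<^sup>2"
    have sm2: "Fh - Fk - lam * (G \<bullet> d) \<le> M" using sm unfolding M_def Fh_def Fk_def
      by (simp add: algebra_simps)
    have I2: "Fh + lam * h zh + (1/2) * Nh \<ge> Fk + lam * h zk + (1/2) * Nk + vk \<bullet> d - \<epsilon>k"
      using I unfolding Fh_def Fk_def Nh_def Nk_def by (simp add: algebra_simps)
    have Lp: "Lpsi / 2 * nd^2 = M + 1/2 * nd^2" unfolding M_def using LpsiE by (simp add: algebra_simps)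
    have lhs: "lam * (h zk - h zh) = lam * h zk - lam * h zh" by (simp add: algebra_simps)
    show ?thesis unfolding lhs Lp using I2 sm2 sq[folded Nh_def Nk_def] rd by linarith
  qed
  have FA: "\<And>u. u \<in> H \<Longrightarrow> lam * (h u - h zh) \<ge> s \<bullet> (u - zh)"
  proof -
    fix u assume uH: "u \<in> H"
    define e where "e = u - zh"
    define A where "A = lam * (h u - h zh) - s \<bullet> e"
    define B where "B = Lpsi / 2 * (norm e)^2"
    have "0 \<le> A + t * B" if t: "0 < t" "t \<le> 1" for t
    proof -
      define ut where "ut = (1 - t) *\<^sub>R zh + t *\<^sub>R u"
      have utH: "ut \<in> H" unfolding ut_def by (rule convexD[OF B1(3) zhH uH]) (use t in auto)
      have hut: "h ut \<le> (1 - t) * h zh + t * h u" unfolding ut_def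
        by (rule convex_onD[OF B1(4)]) (use t zhH uH in auto)
      have ute: "ut - zk = d + t *\<^sub>R e" unfolding ut_def e_def d_def by (simp add: algebra_simps)
      note opt0 = bspec[OF zh_argmin(2) utH]
      have opt: "lam * (G \<bullet> d + h zh) - r \<bullet> d + Lpsi / 2 * nd^2
           \<le> lam * (G \<bullet> (d + t *\<^sub>R e) + h ut) - r \<bullet> (d + t *\<^sub>R e) + Lpsi / 2 * (norm (d + t *\<^sub>R e))^2"
        using opt0 by (simp only: G_def[symmetric] d_def[symmetric] nd_def[symmetric] ute)
      have nq: "(norm (d + t *\<^sub>R e))^2 = nd^2 + 2 * t * (d \<bullet> e) + t^2 * (norm e)^2"
        unfolding norm_add_sq nd_def by (simp add: power_mult_distrib)
      have ga: "G \<bullet> (d + t *\<^sub>R e) = G \<bullet> d + t * (G \<bullet> e)" by (simp add: inner_add_right)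
      have rb: "r \<bullet> (d + t *\<^sub>R e) = r \<bullet> d + t * (r \<bullet> e)" by (simp add: inner_add_right)
      have hh: "lam * (h ut - ((1 - t) * h zh + t * h u)) \<le> 0"
        by (rule mult_nonneg_nonpos) (use params(1) hut in auto)
      define X where "X = lam * (G \<bullet> e) + lam * (h u - h zh) - r \<bullet> e + Lpsi * (d \<bullet> e)"
      have ex: "lam * (G \<bullet> (d + t *\<^sub>R e) + h ut) - r \<bullet> (d + t *\<^sub>R e) + Lpsi / 2 * (norm (d + t *\<^sub>R e))^2
          - (lam * (G \<bullet> d + h zh) - r \<bullet> d + Lpsi / 2 * nd^2)
          = t * X + t * (t * B) + lam * (h ut - ((1 - t) * h zh + t * h u))"
        unfolding nq ga rb B_def X_def by (simp add: algebra_simps power2_eq_square)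
      have sid: "lam * (G \<bullet> e) - r \<bullet> e + Lpsi * (d \<bullet> e) = - (s \<bullet> e)"
        unfolding s_def inner_diff_left inner_scaleR_left by (simp add: inner_commute)
      have XA: "X = A" unfolding X_def A_def using sid by linarith
      have "0 \<le> t * X + t * (t * B)" using ex opt hh by linarith
      then have "0 \<le> t * (A + t * B)" by (simp add: XA distrib_left)
      then show ?thesis using t by (simp add: zero_le_mult_iff)
    qed
    then have "0 \<le> A" by (rule lim0)
    then show "lam * (h u - h zh) \<ge> s \<bullet> (u - zh)" unfolding A_def e_def by simp
  qed
  have sd: "- (s \<bullet> d) = - (r \<bullet> d) + lam * (G \<bullet> d) + Lpsi * nd^2"
  proof -
    have a: "s \<bullet> d = r \<bullet> d - lam * (G \<bullet> d) - Lpsi * (d \<bullet> d)"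
      unfolding s_def inner_diff_left inner_scaleR_left by simp
    have b: "d \<bullet> d = nd^2" unfolding nd_def by (rule power2_norm_eq_inner[symmetric])
    show ?thesis using a b by simp
  qed
  have FAk: "lam * (h zk - h zh) \<ge> - (s \<bullet> d)"
  proof -
    have "zk - zh = - d" by (simp add: d_def)
    then show ?thesis using FA[OF zkH] by simp
  qed
  have Ld: "Lpsi * nd^2 \<le> 2 * \<epsilon>k"
  proof -
    have "Lpsi / 2 * nd^2 = (Lpsi * nd^2) / 2" by simp
    then show ?thesis using E1 FAk sd by linarith
  qed
  have Ld2: "Lpsi * nd^2 \<le> \<sigma>^2 * (norm r)^2"
    using Ld ineq zero_le_power2[of "norm vk"] unfolding r_def by linarith
  have sqd: "sqrt Lpsi * nd \<le> \<sigma> * norm r"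
  proof -
    have "sqrt (Lpsi * nd^2) \<le> sqrt (\<sigma>^2 * (norm r)^2)" using Ld2 by (rule real_sqrt_le_mono)
    then show ?thesis using Lpsi1 params(3) by (simp add: real_sqrt_mult nd_def)
  qed
  have Lnd: "Lpsi * nd \<le> sqrt Lpsi * (\<sigma> * norm r)"
  proof -
    have "Lpsi * nd = sqrt Lpsi * (sqrt Lpsi * nd)" using Lpsi1 by (simp add: real_sqrt_mult_self)
    also have "\<dots> \<le> sqrt Lpsi * (\<sigma> * norm r)" by (rule mult_left_mono[OF sqd]) (use Lpsi1 in simp)
    finally show ?thesis .
  qed
  have wE: "w = (1 / lam) *\<^sub>R (r - Lpsi *\<^sub>R d)" unfolding w_def d_def by (simp add: algebra_simps)
  have wG: "w - G = (1 / lam) *\<^sub>R s" unfolding wE s_def using params(1) by (simp add: algebra_simps)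
  have normw: "norm w \<le> (1 / lam) * (norm r + Lpsi * nd)"
  proof -
    have "norm (r - Lpsi *\<^sub>R d) \<le> norm r + Lpsi * nd" using norm_triangle_ineq4[of r "Lpsi *\<^sub>R d"] Lpsi1 by (simp add: nd_def)
    then show ?thesis unfolding wE using params(1) by (simp add: divide_right_mono)
  qed
  have partA1: "w \<in> (\<lambda>u. gf zk + u + nabla_app Dg zk pk) ` eps_subdiff H h \<delta> zk"
  proof (rule image_eqI[of _ _ "w - G"])
    show "w = gf zk + (w - G) + nabla_app Dg zk pk" unfolding Gdef by simp
    show "w - G \<in> eps_subdiff H h \<delta> zk"
      unfolding eps_subdiff_def
    proof (safe)
      show "zk \<in> H" by (rule zkH)
      fix z' assume z'H: "z' \<in> H"
      have "lam * h z' \<ge> lam * h zk + s \<bullet> (z' - zk) - \<epsilon>k"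
      proof -
        have "s \<bullet> (z' - zk) = s \<bullet> (z' - zh) + s \<bullet> d" unfolding d_def by (simp add: inner_diff_right)
        moreover have "Lpsi / 2 * nd^2 \<le> Lpsi * nd^2" using Lpsi1 by simp
        moreover have "lam * (h z' - h zh) = lam * h z' - lam * h zh" "lam * (h zk - h zh) = lam * h zk - lam * h zh"
          by (simp_all add: right_diff_distrib)
        ultimately show ?thesis using FA[OF z'H] E1 sd by linarith
      qed
      then have X: "(lam * h zk + s \<bullet> (z' - zk) - \<epsilon>k) / lam \<le> h z'"
        using params(1) by (simp add: pos_divide_le_eq mult.commute)
      have "h zk + (w - G) \<bullet> (z' - zk) - \<delta> = (lam * h zk + s \<bullet> (z' - zk) - \<epsilon>k) / lam"
        unfolding wG \<delta>_def using params(1) by (simp add: field_simps)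
      then show "h zk + (w - G) \<bullet> (z' - zk) - \<delta> \<le> h z'" using X by simp
    qed
  qed
  have partA2: "norm w \<le> (1 / lam) * (1 + \<sigma> * sqrt Lpsi) * norm r"
    using normw Lnd params(1) by (simp add: field_simps) 
  have partA3: "\<delta> \<le> (1 / (2 * lam)) * \<sigma>\<^sup>2 * (norm r)\<^sup>2"
  proof -
    have "2 * \<epsilon>k \<le> \<sigma>^2 * (norm r)^2" using ineq zero_le_power2[of "norm vk"] unfolding r_def by linarith
    then show ?thesis unfolding \<delta>_def using params(1) by (simp add: field_simps)
  qed
  have Gh: "grad_tL K gf g Dg c zh p0 = gf zh + nabla_app Dg zh ph" unfolding grad_tL_def ph_def by simp
  have partB1: "wh \<in> (\<lambda>u. gf zh + u + nabla_app Dg zh ph) ` eps_subdiff H h 0 zh"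
  proof (rule image_eqI[of _ _ "w - G"])
    show "wh = gf zh + (w - G) + nabla_app Dg zh ph" unfolding wh_def Gh G_def[symmetric] by simp
    show "w - G \<in> eps_subdiff H h 0 zh"
      unfolding eps_subdiff_def
    proof (safe)
      show "zh \<in> H" by (rule zhH)
      fix z' assume z'H: "z' \<in> H"
      have X: "(s \<bullet> (z' - zh)) / lam \<le> h z' - h zh"
        using FA[OF z'H] params(1) by (simp add: pos_divide_le_eq mult.commute)
      have "(w - G) \<bullet> (z' - zh) = (s \<bullet> (z' - zh)) / lam"
        unfolding wG using params(1) by (simp add: field_simps)
      then show "h zh + (w - G) \<bullet> (z' - zh) - 0 \<le> h z'" using X by simp
    qed
  qed
  define yh where "yh = p0 + c *\<^sub>R g zh"
  define Ph where "Ph = closest_point (uminus ` K) yh"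
  note moh = moreau[OF K_cone, of yh, folded Ph_def]
  have phP: "ph = yh - Ph" using moh(1) unfolding ph_def yh_def by simp
  have gq: "g zh + qh = (1 / c) *\<^sub>R Ph" unfolding qh_def phP yh_def using params(2)
    by (simp add: algebra_simps)
  have partB2: "(g zh + qh) \<bullet> ph = 0" unfolding gq phP using moh(3) by (simp add: inner_commute)
  have partB3: "- (g zh + qh) \<in> K"
  proof -
    have "(1 / c) *\<^sub>R (- Ph) \<in> K" using moh(2) K_cone(4) params(2) unfolding cone_def
      by (metis less_eq_real_def zero_less_divide_1_iff)
    then show ?thesis unfolding gq by (simp add: scaleR_minus_right)
  qed
  have partB4: "ph \<in> dual_cone K" unfolding ph_def by (rule proj_in)
  have gdiff: "norm (grad_tL K gf g Dg c zh p0 - G) \<le> Lam0 * nd"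
  proof -
    have eq: "grad_tL K gf g Dg c zh p0 - G = (gf zh - gf zk) + (nabla_app Dg zh ph - nabla_app Dg zk ph)
               + nabla_app Dg zk (ph - pk)"
      unfolding Gh Gdef using linear_diff[OF nlin[of zk]] by (simp add: algebra_simps)
    have t1: "norm (gf zh - gf zk) \<le> Lf * nd" using B2(5) zkH zhH by (simp add: nd_def d_def)
    have t2: "norm (nabla_app Dg zh ph - nabla_app Dg zk ph) \<le> Lg * nd * (norm p0 + c * B0)"
    proof -
      have "norm (nabla_app Dg zh ph - nabla_app Dg zk ph) \<le> Lg * nd * norm ph" using ndiff by (simp add: nd_def d_def)
      also have "\<dots> \<le> Lg * nd * (norm p0 + c * B0)" using phb B3(3) by (simp add: mult_left_mono nd_def)
      finally show ?thesis .
    qed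
    have t3: "norm (nabla_app Dg zk (ph - pk)) \<le> B1 * (c * B1 * nd)"
      using nabH[OF zkH, of "ph - pk"] phpk B1pos by (meson mult_left_mono order_trans)
    have "norm (grad_tL K gf g Dg c zh p0 - G) \<le> Lf * nd + Lg * nd * (norm p0 + c * B0) + B1 * (c * B1 * nd)"
      unfolding eq using t1 t2 t3 norm_triangle_ineq[of "(gf zh - gf zk) + (nabla_app Dg zh ph - nabla_app Dg zk ph)" "nabla_app Dg zk (ph - pk)"]
        norm_triangle_ineq[of "gf zh - gf zk" "nabla_app Dg zh ph - nabla_app Dg zk ph"] by linarith
    also have "\<dots> = Lam0 * nd" unfolding Lam0_def Lam_def by (simp add: algebra_simps power2_eq_square)
    finally show ?thesis .
  qed
  have partB5: "norm wh \<le> (1 / lam) * (1 + 2 * \<sigma> * sqrt Lpsi) * norm r"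
  proof -
    have "norm wh \<le> norm w + norm (grad_tL K gf g Dg c zh p0 - G)"
      unfolding wh_def G_def[symmetric] using norm_triangle_ineq[of w "grad_tL K gf g Dg c zh p0 - G"]
      by (simp add: algebra_simps)
    moreover have "Lam0 * nd \<le> (1 / lam) * (Lpsi * nd)"
    proof -
      have "lam * Lam0 * nd \<le> Lpsi * nd" using LpsiE by (simp add: nd_def algebra_simps)
      then show ?thesis using params(1) by (simp add: field_simps)
    qed
    ultimately have "norm wh \<le> (1 / lam) * (norm r + Lpsi * nd) + (1 / lam) * (Lpsi * nd)"
      using normw gdiff by linarith
    also have "\<dots> \<le> (1 / lam) * (norm r + sqrt Lpsi * (\<sigma> * norm r)) + (1 / lam) * (sqrt Lpsi * (\<sigma> * norm r))"
      using Lnd params(1) by (simp add: divide_right_mono add_mono)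
    finally show ?thesis using params(1) by (simp add: field_simps)
  qed
  have partB6: "norm qh \<le> Bg1 H Dg * \<sigma> / sqrt Lpsi * norm r + (1 / c) * norm (pk - p0)"
  proof -
    have sL: "sqrt Lpsi > 0" using Lpsi1 by simp
    have ndb: "nd \<le> \<sigma> * norm r / sqrt Lpsi" using sqd sL by (simp add: field_simps)
    have "norm qh = (1 / c) * norm (p0 - ph)" unfolding qh_def using params(2) by simp
    also have "\<dots> \<le> (1 / c) * (norm (pk - p0) + norm (ph - pk))"
      using norm_triangle_ineq[of "p0 - pk" "pk - ph"] params(2) norm_minus_commute[of p0 pk] norm_minus_commute[of pk ph]
      by (simp add: divide_right_mono)
    also have "\<dots> \<le> (1 / c) * norm (pk - p0) + B1 * nd" using phpk params(2) by (simp add: field_simps)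
    also have "\<dots> \<le> (1 / c) * norm (pk - p0) + B1 * (\<sigma> * norm r / sqrt Lpsi)"
      using mult_left_mono[OF ndb B1pos] by simp
    finally show ?thesis unfolding B1_def by (simp add: field_simps)
  qed
  show ?thesis using partA1 partA2 partA3 partB1 partB2 partB3 partB4 partB5 partB6 by blast
qed

end
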